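(* Let $P$ be a generic regular hexagon in $\mathbb{R}^3$, $u_1,\ldots,u_6$ a support system of $P$, and $P'=B_1\ldots B_6$ the derived hexagon, $\overline{OB_i}=u_i$. Assume $B_1,B_3,B_5$ are not collinear and let $\Pi_1$ be the plane through them. Then $B_2,B_4,B_6$ lie in one open half-space (or all on $\Pi_1$) at equal distance from $\Pi_1$, so they lie in a plane $\Pi_2$ parallel to $\Pi_1$ (or equal to it). Moreover, if $B'_2,B'_4,B'_6$ denote the orthogonal projections of $B_2,B_4,B_6$ onto $\Pi_1$, then the plane hexagon $B_1B'_2B_3B'_4B_5B'_6$ has oriented area $0$.
   Context: Indices are cyclic mod $6$; $[\cdot,\cdot]$ is the cross product. For a closed hexagon $A_1\ldots A_6$ put $v_1=\overline{A_1A_2},\ldots,v_6=\overline{A_6A_1}$. The hexagon is generic if any two consecutive $v_i,v_{i+1}$ are not collinear and any three consecutive $v_i,v_{i+1},v_{i+2}$ are not coplanar. A support system is a tuple $u_1,\ldots,u_6$ with $[u_i,u_{i+1}]=v_{i+1}$ for all $i$; a generic hexagon is regular if it has a support system. The derived hexagon for a support system is $B_1\ldots B_6$ with $\overline{OB_i}=u_i$ for a fixed origin $O$. A closed polygon $C_1\ldots C_n$ has oriented area $0$ if $\sum_i[\overline{OC_i},\overline{OC_{i+1}}]=0$ (independent of $O$); for a plane polygon this means its signed area in its plane is zero. *)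

theory Defs
  imports "HOL-Analysis.Analysis" "HOL-Analysis.Cross3"
begin

text \<open>Hexagons are given by 0-based vertex functions on nat, read cyclically mod 6.
  Paper index k (1..6) corresponds to index k-1 here.\<close>

definition side :: "(nat \<Rightarrow> real^3) \<Rightarrow> nat \<Rightarrow> real^3" where
  "side A i = A (Suc i mod 6) - A (i mod 6)"

definition generic_hexagon :: "(nat \<Rightarrow> real^3) \<Rightarrow> bool" where
  "generic_hexagon A \<longleftrightarrow>
     (\<forall>i. \<not> collinear {0, side A i, side A (Suc i)}) \<and>
     (\<forall>i. \<not> coplanar {0, side A i, side A (Suc i), side A (Suc (Suc i))})"

definition support_system :: "(nat \<Rightarrow> real^3) \<Rightarrow> (nat \<Rightarrow> real^3) \<Rightarrow> bool" where
  "support_system A u \<longleftrightarrow>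
     (\<forall>i. cross3 (u (i mod 6)) (u (Suc i mod 6)) = side A (Suc i))"

definition regular_hexagon :: "(nat \<Rightarrow> real^3) \<Rightarrow> bool" where
  "regular_hexagon A \<longleftrightarrow> generic_hexagon A \<and> (\<exists>u. support_system A u)"

definition derived_hexagon :: "real^3 \<Rightarrow> (nat \<Rightarrow> real^3) \<Rightarrow> nat \<Rightarrow> real^3" where
  "derived_hexagon Og u i = Og + u (i mod 6)"

text \<open>Oriented area zero of a closed n-gon (origin taken at 0; the sum is independent of it).\<close>
definition oriented_area_zero :: "nat \<Rightarrow> (nat \<Rightarrow> real^3) \<Rightarrow> bool" where
  "oriented_area_zero n C \<longleftrightarrow> (\<Sum>i<n. cross3 (C (i mod n)) (C (Suc i mod n))) = 0"

end

theory Submission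
  imports Defs
begin

lemma key_id:
  fixes u0 u1 u2 u3 u4 u5 :: "real^3"
  shows "(cross3 (u2-u0) (u4-u0)) \<bullet> (u1-u3) = (cross3 u0 u1 + cross3 u1 u2 + cross3 u2 u3 + cross3 u3 u4 + cross3 u4 u5 + cross3 u5 u0) \<bullet> (u4 - u0)"
    and "(cross3 (u2-u0) (u4-u0)) \<bullet> (u3-u5) = (cross3 u0 u1 + cross3 u1 u2 + cross3 u2 u3 + cross3 u3 u4 + cross3 u4 u5 + cross3 u5 u0) \<bullet> (u0 - u2)"
  by (simp_all add: cross3_def inner_vec_def sum_3 algebra_simps)

lemma recip:
  fixes a b w :: "real^3"
  defines "n \<equiv> cross3 a b"
  shows "(n \<bullet> n) *\<^sub>R w = (w \<bullet> cross3 b n) *\<^sub>R a + (w \<bullet> cross3 n a) *\<^sub>R b + (w \<bullet> n) *\<^sub>R n"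
  unfolding n_def by (simp add: cross3_def inner_vec_def sum_3 vec_eq_iff forall_3 algebra_simps)

lemma shift:
  fixes og u0 u1 u2 u3 u4 u5 :: "real^3"
  shows "cross3 (og+u0) (og+u1) + cross3 (og+u1) (og+u2) + cross3 (og+u2) (og+u3) + cross3 (og+u3) (og+u4) + cross3 (og+u4) (og+u5) + cross3 (og+u5) (og+u0)
   = cross3 u0 u1 + cross3 u1 u2 + cross3 u2 u3 + cross3 u3 u4 + cross3 u4 u5 + cross3 u5 u0"
  by (simp add: cross3_def vec_eq_iff forall_3 algebra_simps)

lemma shift2:
  fixes m b0 b1 b2 b3 b4 b5 :: "real^3"
  shows "cross3 b0 (b1-m) + cross3 (b1-m) b2 + cross3 b2 (b3-m) + cross3 (b3-m) b4 + cross3 b4 (b5-m) + cross3 (b5-m) b0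
   = cross3 b0 b1 + cross3 b1 b2 + cross3 b2 b3 + cross3 b3 b4 + cross3 b4 b5 + cross3 b5 b0"
  by (simp add: cross3_def vec_eq_iff forall_3 algebra_simps)
lemma plane_mem:
  fixes p q r x :: "real^3"
  assumes nz: "cross3 (q-p) (r-p) \<noteq> 0"
  shows "x \<in> affine hull {p,q,r} \<longleftrightarrow> cross3 (q-p) (r-p) \<bullet> (x-p) = 0"
proof
  assume "x \<in> affine hull {p,q,r}"
  then obtain a b c where abc: "x = a *\<^sub>R p + b *\<^sub>R q + c *\<^sub>R r" "a+b+c = 1"
    unfolding affine_hull_3 by blast
  have "x - p = b *\<^sub>R (q-p) + c *\<^sub>R (r-p)"
  proof -
    have "x - p = a *\<^sub>R p + b *\<^sub>R q + c *\<^sub>R r - (a+b+c) *\<^sub>R p" using abc by simp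
    then show ?thesis by (simp add: algebra_simps)
  qed
  then show "cross3 (q-p) (r-p) \<bullet> (x-p) = 0"
    by (simp add: inner_add_right dot_cross_self)
next
  assume h: "cross3 (q-p) (r-p) \<bullet> (x-p) = 0"
  let ?n = "cross3 (q-p) (r-p)"
  have nn: "?n \<bullet> ?n \<noteq> 0" using nz by simp
  define s where "s = ((x-p) \<bullet> cross3 (r-p) ?n) / (?n \<bullet> ?n)"
  define t where "t = ((x-p) \<bullet> cross3 ?n (q-p)) / (?n \<bullet> ?n)"
  have eq: "(?n \<bullet> ?n) *\<^sub>R (x-p) = ((x-p) \<bullet> cross3 (r-p) ?n) *\<^sub>R (q-p) + ((x-p) \<bullet> cross3 ?n (q-p)) *\<^sub>R (r-p)"
    using recip[of "q-p" "r-p" "x-p"] h by (simp add: inner_commute)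
  have "x - p = (1/(?n \<bullet> ?n)) *\<^sub>R ((?n \<bullet> ?n) *\<^sub>R (x-p))" using nn by simp
  also have "\<dots> = (1/(?n \<bullet> ?n)) *\<^sub>R (((x-p) \<bullet> cross3 (r-p) ?n) *\<^sub>R (q-p) + ((x-p) \<bullet> cross3 ?n (q-p)) *\<^sub>R (r-p))"
    by (simp only: eq)
  also have "\<dots> = s *\<^sub>R (q-p) + t *\<^sub>R (r-p)"
    by (simp only: s_def t_def scaleR_add_right scaleR_scaleR) simp
  finally have "x - p = s *\<^sub>R (q-p) + t *\<^sub>R (r-p)" .
  then have "x = (1-s-t) *\<^sub>R p + s *\<^sub>R q + t *\<^sub>R r"
    by (simp add: algebra_simps)
  then show "x \<in> affine hull {p,q,r}"
    unfolding affine_hull_3 by (intro CollectI exI[of _ "1-s-t"] exI[of _ s] exI[of _ t]) auto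
qed

lemma closest_plane:
  fixes p q r x :: "real^3"
  defines "n \<equiv> cross3 (q-p) (r-p)"
  assumes nz: "n \<noteq> 0"
  shows "closest_point (affine hull {p,q,r}) x = x - ((n \<bullet> (x-p)) / (n \<bullet> n)) *\<^sub>R n"
proof (rule closest_point_unique[symmetric])
  let ?y = "x - ((n \<bullet> (x-p)) / (n \<bullet> n)) *\<^sub>R n"
  have nn: "n \<bullet> n \<noteq> 0" using nz by simp
  have yp: "n \<bullet> (?y - p) = 0"
  proof -
    have e: "?y - p = (x - p) - ((n \<bullet> (x-p)) / (n \<bullet> n)) *\<^sub>R n" by simp
    have "n \<bullet> (?y - p) = n \<bullet> (x-p) - ((n \<bullet> (x-p)) / (n \<bullet> n)) * (n \<bullet> n)"
      unfolding e by (simp only: inner_diff_right inner_scaleR_right)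
    also have "\<dots> = 0" using nn by simp
    finally show ?thesis .
  qed
  show "convex (affine hull {p,q,r})" by (simp add: affine_imp_convex)
  show "closed (affine hull {p,q,r})" by simp
  show "?y \<in> affine hull {p,q,r}" using plane_mem[of q p r ?y] nz yp unfolding n_def by simp
  show "\<forall>z\<in>affine hull {p, q, r}. dist x ?y \<le> dist x z"
  proof
    fix z assume "z \<in> affine hull {p,q,r}"
    then have zp: "n \<bullet> (z - p) = 0" using plane_mem[of q p r z] nz unfolding n_def by simp
    define k where "k = (n \<bullet> (x-p)) / (n \<bullet> n)"
    have o: "(x - ?y) \<bullet> (?y - z) = 0"
    proof -
      have "?y - z = (?y - p) - (z - p)" by simp
      then have "n \<bullet> (?y - z) = 0" using yp zp by (simp only: inner_diff_right)
      then show ?thesis by simp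
    qed
    have e: "x - z = (x - ?y) + (?y - z)" by simp
    have "(norm (x - z))^2 = (norm (x - ?y))^2 + (norm (?y - z))^2"
      unfolding e by (rule norm_add_Pythagorean) (use o in \<open>simp add: orthogonal_def\<close>)
    then have "(norm (x - ?y))^2 \<le> (norm (x-z))^2" by simp
    then have "norm (x - ?y) \<le> norm (x-z)" by (rule power2_le_imp_le) simp
    then show "dist x ?y \<le> dist x z" by (simp only: dist_norm)
  qed
qed

lemma closure6:
  fixes A u :: "nat \<Rightarrow> real^3"
  assumes sup: "support_system A u"
  shows "cross3 (u 0) (u 1) + cross3 (u 1) (u 2) + cross3 (u 2) (u 3) + cross3 (u 3) (u 4) + cross3 (u 4) (u 5) + cross3 (u 5) (u 0) = 0"
proof -
  have s: "cross3 (u (i mod 6)) (u (Suc i mod 6)) = side A (Suc i)" for i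
    using sup unfolding support_system_def by (rule spec)
  have s': "cross3 (u i) (u (i+1)) = side A (i+1)" if "i < 5" for i
    using s[of i] that by simp
  have s5: "cross3 (u 5) (u 0) = side A 6"
  proof -
    have a: "(5::nat) mod 6 = 5" "Suc 5 = 6" "(6::nat) mod 6 = 0" by simp_all
    show ?thesis using s[of 5] by (simp only: a)
  qed
  have e: "cross3 (u 0) (u 1) + cross3 (u 1) (u 2) + cross3 (u 2) (u 3) + cross3 (u 3) (u 4) + cross3 (u 4) (u 5) + cross3 (u 5) (u 0)
      = side A 1 + side A 2 + side A 3 + side A 4 + side A 5 + side A 6"
  proof -
    have n: "(0::nat)+1 = 1" "(1::nat)+1=2" "(2::nat)+1=3" "(3::nat)+1=4" "(4::nat)+1=5" by simp_all
    have "cross3 (u 0) (u 1) = side A 1" "cross3 (u 1) (u 2) = side A 2" "cross3 (u 2) (u 3) = side A 3"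
      "cross3 (u 3) (u 4) = side A 4" "cross3 (u 4) (u 5) = side A 5"
      using s'[of 0] s'[of 1] s'[of 2] s'[of 3] s'[of 4] by (simp_all only: n)
    then show ?thesis using s5 by (simp only:)
  qed
  have s6: "side A 6 = A 1 - A 0" unfolding side_def by simp
  have "side A 1 + side A 2 + side A 3 + side A 4 + side A 5 + side A 6 = 0"
    unfolding s6 unfolding side_def by (simp add: numeral_2_eq_2)
  with e show ?thesis by simp
qed

lemma sum6: "(\<Sum>i<6. (g::nat \<Rightarrow> real^3) i) = g 0 + g 1 + g 2 + g 3 + g 4 + g 5"
proof -
  have L: "{..<6::nat} = {0,1,2,3,4,5}" by auto
  show ?thesis unfolding L by (simp add: algebra_simps)
qed
lemma sum6f: "(\<Sum>i<6. cross3 ((f::nat\<Rightarrow>real^3) (i mod 6)) (f (Suc i mod 6))) = cross3 (f 0) (f 1) + cross3 (f 1) (f 2) + cross3 (f 2) (f 3) + cross3 (f 3) (f 4) + cross3 (f 4) (f 5) + cross3 (f 5) (f 0)"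
proof -
  have t: "(0::nat) mod 6 = 0" "Suc 0 mod 6 = 1" "(1::nat) mod 6 = 1" "Suc 1 mod 6 = 2" "(2::nat) mod 6 = 2" "Suc 2 mod 6 = 3"
     "(3::nat) mod 6 = 3" "Suc 3 mod 6 = 4" "(4::nat) mod 6 = 4" "Suc 4 mod 6 = 5" "(5::nat) mod 6 = 5" "Suc 5 mod 6 = 0"
    by simp_all
  show ?thesis unfolding sum6 by (simp only: t)
qed

theorem theorem5p3:
  fixes A u :: "nat \<Rightarrow> real^3" and Og :: "real^3"
  defines "B \<equiv> derived_hexagon Og u"
  defines "\<Pi>1 \<equiv> affine hull {B 0, B 2, B 4}"
  defines "nv \<equiv> cross3 (B 2 - B 0) (B 4 - B 0)"
  assumes gen: "generic_hexagon A"
    and reg: "regular_hexagon A"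
    and sup: "support_system A u"
    and ncol: "\<not> collinear {B 0, B 2, B 4}"
  shows "((\<forall>j\<in>{1,3,5::nat}. nv \<bullet> (B j - B 0) > 0) \<or>
          (\<forall>j\<in>{1,3,5::nat}. nv \<bullet> (B j - B 0) < 0) \<or>
          (\<forall>j\<in>{1,3,5::nat}. B j \<in> \<Pi>1))
       \<and> infdist (B 1) \<Pi>1 = infdist (B 3) \<Pi>1
       \<and> infdist (B 3) \<Pi>1 = infdist (B 5) \<Pi>1
       \<and> (\<exists>\<Pi>2 c. \<Pi>2 = (\<lambda>x. x + c) ` \<Pi>1 \<and> {B 1, B 3, B 5} \<subseteq> \<Pi>2)
       \<and> oriented_area_zero 6
           (\<lambda>i. if even i then B i else closest_point \<Pi>1 (B i))"
proof -
  have Bk: "B k = Og + u k" if "k < 6" for k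
    using that unfolding B_def derived_hexagon_def by simp
  have B6: "B 6 = B 0" unfolding B_def derived_hexagon_def by simp
  have s: "cross3 (u (i mod 6)) (u (Suc i mod 6)) = side A (Suc i)" for i
    using sup unfolding support_system_def by (rule spec)
  have C0: "cross3 (u 0) (u 1) + cross3 (u 1) (u 2) + cross3 (u 2) (u 3) + cross3 (u 3) (u 4) + cross3 (u 4) (u 5) + cross3 (u 5) (u 0) = 0"
    by (rule closure6[OF sup])
  have nz: "nv \<noteq> 0"
  proof
    assume "nv = 0"
    then have "collinear {0, B 2 - B 0, B 4 - B 0}" unfolding nv_def by (simp add: cross_eq_0)
    then have "collinear {B 2, B 0, B 4}" by (subst collinear_3) (simp_all add: NO_MATCH_def)
    then show False using ncol by (simp add: insert_commute)
  qed
  define d where "d = nv \<bullet> (B 1 - B 0)"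
  have N: "nv = cross3 (u 2 - u 0) (u 4 - u 0)" unfolding nv_def using Bk[of 0] Bk[of 2] Bk[of 4] by simp
  have dd: "nv \<bullet> (B j - B 0) = d" if "j \<in> {1,3,5}" for j
  proof -
    have k1: "nv \<bullet> (u 1 - u 3) = 0" using key_id(1)[of "u 2" "u 0" "u 4" "u 1" "u 3" "u 5"] C0 N by simp
    have k2: "nv \<bullet> (u 3 - u 5) = 0" using key_id(2)[of "u 2" "u 0" "u 4" "u 3" "u 5" "u 1"] C0 N by simp
    have "nv \<bullet> (u 1 - u 0) = nv \<bullet> (u 3 - u 0)"
      using k1 by (simp add: inner_diff_right)
    moreover have "nv \<bullet> (u 3 - u 0) = nv \<bullet> (u 5 - u 0)"
      using k2 by (simp add: inner_diff_right)
    ultimately show ?thesis using that unfolding d_def using Bk[of 0] Bk[of 1] Bk[of 3] Bk[of 5] by auto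
  qed
  have Pmem: "x \<in> \<Pi>1 \<longleftrightarrow> nv \<bullet> (x - B 0) = 0" for x
    unfolding \<Pi>1_def nv_def using plane_mem[of "B 2" "B 0" "B 4" x] nz unfolding nv_def by simp
  define m where "m = (d / (nv \<bullet> nv)) *\<^sub>R nv"
  have cp: "closest_point \<Pi>1 (B j) = B j - m" if "j \<in> {1,3,5}" for j
    unfolding \<Pi>1_def m_def using closest_plane[of "B 2" "B 0" "B 4" "B j"] nz dd[OF that] unfolding nv_def by simp
  have ne: "\<Pi>1 \<noteq> {}" unfolding \<Pi>1_def by (simp add: hull_inc)
  have idist: "infdist (B j) \<Pi>1 = norm m" if "j \<in> {1,3,5}" for j
    unfolding infdist_eq_setdist using setdist_closest_point[of \<Pi>1 "B j"] ne cp[OF that]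
    unfolding \<Pi>1_def by (simp add: dist_norm)
  have c1: "((\<forall>j\<in>{1,3,5::nat}. nv \<bullet> (B j - B 0) > 0) \<or>
          (\<forall>j\<in>{1,3,5::nat}. nv \<bullet> (B j - B 0) < 0) \<or>
          (\<forall>j\<in>{1,3,5::nat}. B j \<in> \<Pi>1))"
  proof (cases "d > 0")
    case True then show ?thesis using dd by auto
  next
    case False
    show ?thesis
    proof (cases "d < 0")
      case True then show ?thesis using dd by auto
    next
      case False
      then have "d = 0" using \<open>\<not> d > 0\<close> by simp
      then show ?thesis using dd Pmem by auto
    qed
  qed
  have c4: "\<exists>\<Pi>2 c. \<Pi>2 = (\<lambda>x. x + c) ` \<Pi>1 \<and> {B 1, B 3, B 5} \<subseteq> \<Pi>2"
  proof (intro exI conjI)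
    let ?c = "B 1 - B 0"
    have "B j - ?c \<in> \<Pi>1" if "j \<in> {1,3,5}" for j
    proof -
      have "nv \<bullet> (B j - ?c - B 0) = nv \<bullet> (B j - B 0) - nv \<bullet> (B 1 - B 0)"
        by (simp add: inner_diff_right)
      then show ?thesis using Pmem dd[OF that] dd[of 1] by simp
    qed
    then have "B j \<in> (\<lambda>x. x + ?c) ` \<Pi>1" if "j \<in> {1,3,5}" for j
      using that by (metis (no_types, lifting) diff_add_cancel image_eqI)
    then show "{B 1, B 3, B 5} \<subseteq> (\<lambda>x. x + ?c) ` \<Pi>1" by simp
  qed simp
  define F where "F = (\<lambda>i. if even i then B i else closest_point \<Pi>1 (B i))"
  have F: "F 0 = B 0" "F 1 = B 1 - m" "F 2 = B 2" "F 3 = B 3 - m" "F 4 = B 4" "F 5 = B 5 - m"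
    using cp[of 1] cp[of 3] cp[of 5] by (simp_all add: F_def)
  have c5': "oriented_area_zero 6 F"
  proof -
    have "(\<Sum>i<6. cross3 (F (i mod 6)) (F (Suc i mod 6)))
      = cross3 (B 0) (B 1 - m) + cross3 (B 1 - m) (B 2) + cross3 (B 2) (B 3 - m) + cross3 (B 3 - m) (B 4) + cross3 (B 4) (B 5 - m) + cross3 (B 5 - m) (B 0)"
      unfolding sum6f F by (rule refl)
    also have "\<dots> = cross3 (B 0) (B 1) + cross3 (B 1) (B 2) + cross3 (B 2) (B 3) + cross3 (B 3) (B 4) + cross3 (B 4) (B 5) + cross3 (B 5) (B 0)"
      by (rule shift2)
    also have "\<dots> = 0" using shift[of Og "u 0" "u 1" "u 2" "u 3" "u 4" "u 5"] C0 
      Bk[of 0] Bk[of 1] Bk[of 2] Bk[of 3] Bk[of 4] Bk[of 5] by simp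
    finally show ?thesis unfolding oriented_area_zero_def .
  qed
  have c5: "oriented_area_zero 6 (\<lambda>i. if even i then B i else closest_point \<Pi>1 (B i))"
    using c5' unfolding F_def .
  show ?thesis using c1 c4 c5 idist[of 1] idist[of 3] idist[of 5] by simp
qed

end
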